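(* Let $G=S_4$ act on a complex abelian variety $A$. Let $H=\langle(12),(34)\rangle\cong\mathbb{Z}_2\times\mathbb{Z}_2$ and $D_4=\langle(12),(34),(13)(24)\rangle$. Let $V$ be the standard $3$-dimensional irreducible representation of $S_4$. Consider the double cosets $H_2=H(23)H$ and $H_3=H(13)(24)H$, and set $q_i=\frac14\sum_{y\in H_i}y$. Then $$A_{H,\widetilde V}=\{z\in A_H:\ q_2(z)=0,\ q_3(z)=-z\}_0=P(A_H/A_{D_4}).$$
   Context: The standard representation $V$ has character values $\chi_V(1)=3$, $\chi_V=1$ on transpositions, $-1$ on double transpositions, $0$ on $3$-cycles, and $-1$ on $4$-cycles. The action of $G$ induces $\mathbb{Q}[G]\to\mathrm{End}_\mathbb{Q}(A)$. For $\alpha\in\mathrm{End}_\mathbb{Q}(A)$, $\mathrm{Im}(\alpha):=\mathrm{Im}(n\alpha)$ for any positive integer $n$ with $n\alpha\in\mathrm{End}(A)$. For $K\le G$ set $p_K=\frac1{|K|}\sum_{k\in K}k$ and $A_K=\mathrm{Im}(p_K)$. Define $P(A_H/A_{D_4}):=\mathrm{Im}(p_H-p_{D_4})$, the complement of $A_{D_4}$ in $A_H$. Define $e_V:=\frac{3}{24}\sum_g\chi_V(g^{-1})g$ and $A_{H,\widetilde V}:=\mathrm{Im}(p_He_V)$. $\{\dots\}_0$ denotes the connected component containing $0$. *)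

theory Defs
  imports "HOL-Analysis.Analysis" "HOL-Combinatorics.Transposition"
begin

type_synonym 'g cvec = "complex ^ 'g"

definition is_lattice :: "'g::finite cvec set \<Rightarrow> bool" where
  "is_lattice L \<longleftrightarrow> 0 \<in> L \<and> (\<forall>x\<in>L. \<forall>y\<in>L. x - y \<in> L)
     \<and> (\<exists>e>0. \<forall>x\<in>L. norm x < e \<longrightarrow> x = 0)
     \<and> span L = UNIV"

definition is_polarization :: "'g::finite cvec set \<Rightarrow> ('g cvec \<Rightarrow> 'g cvec \<Rightarrow> real) \<Rightarrow> bool" where
  "is_polarization L E \<longleftrightarrow> bilinear E
     \<and> (\<forall>v w. E v w = - E w v)
     \<and> (\<forall>v w. E (\<i> *s v) (\<i> *s w) = E v w)
     \<and> (\<forall>v. v \<noteq> 0 \<longrightarrow> E (\<i> *s v) v > 0)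
     \<and> (\<forall>l\<in>L. \<forall>m\<in>L. E l m \<in> \<int>)"

definition abelian_variety :: "'g::finite cvec set \<Rightarrow> bool" where
  "abelian_variety L \<longleftrightarrow> is_lattice L \<and> (\<exists>E. is_polarization L E)"

definition tor :: "'g::finite cvec set \<Rightarrow> 'g cvec \<Rightarrow> 'g cvec set" where
  "tor L v = (\<lambda>l. v + l) ` L"

definition torus_top :: "'g::finite cvec set \<Rightarrow> 'g cvec set topology" where
  "torus_top L = topology (\<lambda>U. U \<subseteq> range (tor L) \<and> open (tor L -` U))"

text \<open>Complex-linear maps C^g -> C^g preserving the lattice: these induce the
  endomorphisms (group homomorphisms, holomorphic) of A.\<close>
definition is_endo :: "'g::finite cvec set \<Rightarrow> ('g cvec \<Rightarrow> 'g cvec) \<Rightarrow> bool" where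
  "is_endo L f \<longleftrightarrow> (\<forall>x y. f (x + y) = f x + f y) \<and> (\<forall>c x. f (c *s x) = c *s f x)
     \<and> f ` L \<subseteq> L"

definition im_endo :: "'g::finite cvec set \<Rightarrow> ('g cvec \<Rightarrow> 'g cvec) \<Rightarrow> 'g cvec set set" where
  "im_endo L f = tor L ` range f"

definition S4 :: "(nat \<Rightarrow> nat) set" where
  "S4 = {\<sigma>. \<sigma> permutes {1,2,3,4}}"

definition gen_sub :: "(nat \<Rightarrow> nat) set \<Rightarrow> (nat \<Rightarrow> nat) set" where
  "gen_sub S = \<Inter>{K. id \<in> K \<and> S \<subseteq> K \<and> (\<forall>a\<in>K. \<forall>b\<in>K. a \<circ> b \<in> K)}"

definition H4 :: "(nat \<Rightarrow> nat) set" where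
  "H4 = gen_sub {Transposition.transpose 1 2, Transposition.transpose 3 4}"

definition D4 :: "(nat \<Rightarrow> nat) set" where
  "D4 = gen_sub {Transposition.transpose 1 2, Transposition.transpose 3 4, Transposition.transpose 1 3 \<circ> Transposition.transpose 2 4}"

definition double_coset :: "(nat \<Rightarrow> nat) set \<Rightarrow> (nat \<Rightarrow> nat) \<Rightarrow> (nat \<Rightarrow> nat) set" where
  "double_coset K x = {h \<circ> x \<circ> h' | h h'. h \<in> K \<and> h' \<in> K}"

definition moved :: "(nat \<Rightarrow> nat) \<Rightarrow> nat" where
  "moved g = card {i \<in> {1,2,3,4::nat}. g i \<noteq> i}"

text \<open>Character of the standard 3-dimensional representation V, by conjugacy class:
  identity 3, transpositions 1, double transpositions -1, 3-cycles 0, 4-cycles -1.\<close>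
definition chiV :: "(nat \<Rightarrow> nat) \<Rightarrow> int" where
  "chiV g = (if g = id then 3
             else if moved g = 2 then 1
             else if moved g = 4 \<and> g \<circ> g = id then -1
             else if moved g = 3 then 0
             else -1)"

definition S4_action :: "'g::finite cvec set \<Rightarrow> ((nat \<Rightarrow> nat) \<Rightarrow> 'g cvec \<Rightarrow> 'g cvec) \<Rightarrow> bool" where
  "S4_action L \<rho> \<longleftrightarrow> (\<forall>\<sigma>\<in>S4. is_endo L (\<rho> \<sigma>))
     \<and> \<rho> id = id \<and> (\<forall>\<sigma>\<in>S4. \<forall>\<tau>\<in>S4. \<rho> (\<sigma> \<circ> \<tau>) = \<rho> \<sigma> \<circ> \<rho> \<tau>)"

text \<open>Norm map N_K = sum_{k in K} k = |K| p_K.\<close>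
definition normop :: "((nat \<Rightarrow> nat) \<Rightarrow> 'g::finite cvec \<Rightarrow> 'g cvec) \<Rightarrow> (nat \<Rightarrow> nat) set \<Rightarrow> 'g cvec \<Rightarrow> 'g cvec" where
  "normop \<rho> K v = (\<Sum>k\<in>K. \<rho> k v)"

text \<open>A_H = Im(p_H) = Im(|H| p_H).\<close>
definition A_sub :: "'g::finite cvec set \<Rightarrow> ((nat \<Rightarrow> nat) \<Rightarrow> 'g cvec \<Rightarrow> 'g cvec) \<Rightarrow> (nat \<Rightarrow> nat) set \<Rightarrow> 'g cvec set set" where
  "A_sub L \<rho> K = im_endo L (normop \<rho> K)"

text \<open>32 p_H e_V = sum_{h in H} sum_{g in S4} chi_V(g^-1) (h g); A_{H,V~} = Im(p_H e_V).\<close>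
definition A_HV :: "'g::finite cvec set \<Rightarrow> ((nat \<Rightarrow> nat) \<Rightarrow> 'g cvec \<Rightarrow> 'g cvec) \<Rightarrow> 'g cvec set set" where
  "A_HV L \<rho> = im_endo L (\<lambda>v. \<Sum>h\<in>H4. \<Sum>g\<in>S4. of_int (chiV (inv g)) *s \<rho> (h \<circ> g) v)"

text \<open>P(A_H/A_D4) = Im(p_H - p_D4) = Im(8 (p_H - p_D4)) = Im(2 N_H - N_D4).\<close>
definition P_compl :: "'g::finite cvec set \<Rightarrow> ((nat \<Rightarrow> nat) \<Rightarrow> 'g cvec \<Rightarrow> 'g cvec) \<Rightarrow> 'g cvec set set" where
  "P_compl L \<rho> = im_endo L (\<lambda>v. 2 *s normop \<rho> H4 v - normop \<rho> D4 v)"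

text \<open>{z in A_H : q_2 z = 0, q_3 z = -z}, with q_i = 1/4 sum_{y in H_i} y; the
  conditions are imposed via the integral multiples 4 q_i.\<close>
definition Q_set :: "'g::finite cvec set \<Rightarrow> ((nat \<Rightarrow> nat) \<Rightarrow> 'g cvec \<Rightarrow> 'g cvec) \<Rightarrow> 'g cvec set set" where
  "Q_set L \<rho> = {z \<in> A_sub L \<rho> H4. \<exists>v. z = tor L v
      \<and> normop \<rho> (double_coset H4 (Transposition.transpose 2 3)) v \<in> L
      \<and> normop \<rho> (double_coset H4 (Transposition.transpose 1 3 \<circ> Transposition.transpose 2 4)) v + 4 *s v \<in> L}"

end

theory Submission
  imports Defs
begin


definition idL :: "nat list" where "idL = [1,2,3,4]"
definition PL :: "nat list list" where "PL = [[1, 2, 3, 4], [1, 2, 4, 3], [1, 3, 2, 4], [1, 3, 4, 2], [1, 4, 2, 3], [1, 4, 3, 2], [2, 1, 3, 4], [2, 1, 4, 3], [2, 3, 1, 4], [2, 3, 4, 1], [2, 4, 1, 3], [2, 4, 3, 1], [3, 1, 2, 4], [3, 1, 4, 2], [3, 2, 1, 4], [3, 2, 4, 1], [3, 4, 1, 2], [3, 4, 2, 1], [4, 1, 2, 3], [4, 1, 3, 2], [4, 2, 1, 3], [4, 2, 3, 1], [4, 3, 1, 2], [4, 3, 2, 1]]"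
definition compL :: "nat list \<Rightarrow> nat list \<Rightarrow> nat list" where "compL x y = map (\<lambda>i. x ! (i - 1)) y"
definition invL :: "nat list \<Rightarrow> nat list" where "invL x = map (\<lambda>j. hd (filter (\<lambda>i. x ! (i - 1) = j) [1,2,3,4])) [1,2,3,4]"
definition HL :: "nat list list" where "HL = [[1,2,3,4],[2,1,3,4],[1,2,4,3],[2,1,4,3]]"
definition DL :: "nat list list" where "DL = [[1, 2, 3, 4], [2, 1, 3, 4], [1, 2, 4, 3], [3, 4, 1, 2], [2, 1, 4, 3], [3, 4, 2, 1], [4, 3, 1, 2], [4, 3, 2, 1]]"
definition dcL :: "nat list \<Rightarrow> nat list list" where "dcL x = concat (map (\<lambda>h. map (\<lambda>k. compL (compL h x) k) HL) HL)"
definition ind :: "nat list list \<Rightarrow> nat list \<Rightarrow> int" where "ind K x = (if x \<in> set K then 1 else 0)"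
definition movedL :: "nat list \<Rightarrow> nat" where "movedL y = length (filter (\<lambda>i. y ! (i - 1) \<noteq> i) [1,2,3,4])"
definition chiL :: "nat list \<Rightarrow> int" where "chiL y = (if y = idL then 3 else if movedL y = 2 then 1
   else if movedL y = 4 \<and> compL y y = idL then -1 else if movedL y = 3 then 0 else -1)"
definition conv :: "(nat list \<Rightarrow> int) \<Rightarrow> (nat list \<Rightarrow> int) \<Rightarrow> nat list \<Rightarrow> int" where
  "conv a b z = sum_list (map (\<lambda>x. a x * b (compL (invL x) z)) PL)"
definition mC :: "nat list \<Rightarrow> int" where "mC x = 2 * ind HL x - ind DL x"
definition words :: "nat list list \<Rightarrow> nat list list" where
  "words G = idL # G @ concat (map (\<lambda>a. map (compL a) G) G) @ concat (map (\<lambda>a. concat (map (\<lambda>b. map (compL (compL a b)) G) G)) G)"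

definition pl :: "nat list \<Rightarrow> nat \<Rightarrow> nat" where
  "pl xs i = (if 1 \<le> i \<and> i \<le> 4 then xs ! (i - 1) else i)"

abbreviation "PS \<equiv> set PL"

lemma C_ok: "\<forall>x\<in>PS. length x = 4 \<and> list_all (\<lambda>i. 1 \<le> i \<and> i \<le> 4) x" by code_simp
lemma C_closed: "\<forall>x\<in>PS. \<forall>y\<in>PS. compL x y \<in> PS" by code_simp
lemma C_inv: "\<forall>x\<in>PS. invL x \<in> PS \<and> compL x (invL x) = idL \<and> compL (invL x) x = idL" by code_simp
lemma C_cancel: "\<forall>x\<in>PS. \<forall>z\<in>PS. compL x (compL (invL x) z) = z" by code_simp
lemma C_cancel2: "\<forall>x\<in>PS. \<forall>z\<in>PS. compL (invL x) (compL x z) = z" by code_simp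
lemma C_dist: "distinct PL" by code_simp
lemma C_id: "idL \<in> PS" by code_simp
lemma C_H1: "set HL \<subseteq> PS" by code_simp
lemma C_H2: "idL \<in> set HL" by code_simp
lemma C_H3: "\<forall>a\<in>set HL. \<forall>b\<in>set HL. compL a b \<in> set HL" by code_simp
lemma C_H4: "set [[2,1,3,4],[1,2,4,3]] \<subseteq> set HL" by code_simp
lemma C_H5: "set HL \<subseteq> set (words [[2,1,3,4],[1,2,4,3]])" by code_simp
lemma C_D1: "set DL \<subseteq> PS" by code_simp
lemma C_D2: "idL \<in> set DL" by code_simp
lemma C_D3: "\<forall>a\<in>set DL. \<forall>b\<in>set DL. compL a b \<in> set DL" by code_simp
lemma C_D4: "set [[2,1,3,4],[1,2,4,3],[3,4,1,2]] \<subseteq> set DL" by code_simp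
lemma C_D5: "set DL \<subseteq> set (words [[2,1,3,4],[1,2,4,3],[3,4,1,2]])" by code_simp
lemma C_H: "set HL \<subseteq> PS \<and> (\<forall>a\<in>set HL. \<forall>b\<in>set HL. compL a b \<in> set HL) \<and> set HL \<subseteq> set (words [[2,1,3,4],[1,2,4,3]]) \<and> idL \<in> set HL" by code_simp
lemma C_D: "set DL \<subseteq> PS \<and> (\<forall>a\<in>set DL. \<forall>b\<in>set DL. compL a b \<in> set DL) \<and> set DL \<subseteq> set (words [[2,1,3,4],[1,2,4,3],[3,4,1,2]]) \<and> idL \<in> set DL
   \<and> set [[2,1,3,4],[1,2,4,3],[3,4,1,2]] \<subseteq> set DL" by code_simp
lemma C_dc: "set (dcL [1,3,2,4]) \<subseteq> PS \<and> set (dcL [3,4,1,2]) \<subseteq> PS" by code_simp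

lemma C_I1: "\<forall>z\<in>set PL. conv (ind HL) (\<lambda>x. chiL (invL x)) z = 4 * mC z"
  by code_simp
lemma C_I2: "\<forall>z\<in>set PL. conv mC mC z = 8 * mC z"
  by code_simp
lemma C_I3: "\<forall>z\<in>set PL. conv (\<lambda>x. 8 * ind [idL] x - mC x) (ind HL) z = conv (ind (dcL [3,4,1,2])) (ind HL) z + 4 * ind HL z"
  by code_simp
lemma C_I4: "\<forall>z\<in>set PL. conv (ind HL) (\<lambda>x. ind [idL] x - ind [[3,4,1,2]] x) z = mC z"
  by code_simp
lemma C_I5: "\<forall>z\<in>set PL. conv (ind (dcL [1,3,2,4])) mC z = 0"
  by code_simp
lemma C_I6: "\<forall>z\<in>set PL. conv (ind (dcL [3,4,1,2])) mC z + 4 * mC z = 0"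
  by code_simp

lemma pl_comp:
  assumes "list_all (\<lambda>i. 1 \<le> i \<and> i \<le> 4) y" "length y = 4"
  shows "pl (compL x y) = pl x \<circ> pl y"
proof (rule ext)
  fix i show "pl (compL x y) i = (pl x \<circ> pl y) i"
  proof (cases "1 \<le> i \<and> i \<le> 4")
    case True
    then have "y ! (i - 1) \<ge> 1 \<and> y ! (i - 1) \<le> 4" using assms by (auto simp: list_all_length)
    moreover have "i - 1 < length y" using True assms by auto
    ultimately show ?thesis using True by (simp add: pl_def compL_def)
  next
    case False
    then have "pl y i = i" "pl x i = i" "pl (compL x y) i = i" by (auto simp: pl_def)
    then show ?thesis by simp
  qed
qed

lemma pl_compP: "x \<in> PS \<Longrightarrow> y \<in> PS \<Longrightarrow> pl (compL x y) = pl x \<circ> pl y"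
  using C_ok pl_comp by blast

lemma pl_inj: assumes "length x = 4" "length y = 4" "pl x = pl y" shows "x = y"
proof (rule nth_equalityI)
  show "length x = length y" using assms by simp
  fix j assume "j < length x"
  then have "pl x (j+1) = x ! j" "pl y (j+1) = y ! j" using assms(1,2) by (auto simp: pl_def)
  then show "x ! j = y ! j" using assms(3) by metis
qed

lemma pl_injP: "x \<in> PS \<Longrightarrow> y \<in> PS \<Longrightarrow> pl x = pl y \<Longrightarrow> x = y"
  using C_ok pl_inj by blast

lemma inj_pl: "inj_on pl PS" using pl_injP by (auto intro: inj_onI)

lemma four_cases: "1 \<le> i \<Longrightarrow> i \<le> (4::nat) \<Longrightarrow> i = 1 \<or> i = 2 \<or> i = 3 \<or> i = 4" by auto

lemma pl_id: "pl idL = id"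
proof (rule ext)
  fix i show "pl idL i = id i"
  proof (cases "1 \<le> i \<and> i \<le> 4")
    case True then have "i=1 \<or> i=2 \<or> i=3 \<or> i=4" by auto
    then show ?thesis by (auto simp: pl_def idL_def)
  qed (auto simp: pl_def)
qed

lemma pl_inv_comp: "x \<in> PS \<Longrightarrow> pl x \<circ> pl (invL x) = id \<and> pl (invL x) \<circ> pl x = id"
  using C_inv pl_compP pl_id by metis

lemma inv_pl: "x \<in> PS \<Longrightarrow> inv (pl x) = pl (invL x)"
  using pl_inv_comp inv_unique_comp by blast

lemma pl_permutes: assumes "x \<in> PS" shows "pl x permutes {1,2,3,4}"
  unfolding permutes_def
proof (intro conjI allI impI)
  fix i :: nat assume "i \<notin> {1,2,3,4}"
  then show "pl x i = i" by (auto simp: pl_def dest!: four_cases)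
next
  fix y
  have e: "pl x \<circ> pl (invL x) = id" "pl (invL x) \<circ> pl x = id" using pl_inv_comp assms by auto
  show "\<exists>!i. pl x i = y"
  proof
    show "pl x (pl (invL x) y) = y" using e(1) by (metis comp_apply id_apply)
    fix i assume "pl x i = y" then show "i = pl (invL x) y" using e(2) by (metis comp_apply id_apply)
  qed
qed

lemma C4: "\<forall>a\<in>set [1,2,3,4]. \<forall>b\<in>set [1,2,3,4]. \<forall>c\<in>set [1,2,3,4]. \<forall>d\<in>set [1,2,3::nat,4]. distinct [a,b,c,d] \<longrightarrow> [a,b,c,d] \<in> set PL"
  by code_simp

lemma list4_in_PL:
  assumes "a \<in> {1,2,3,4}" "b \<in> {1,2,3,4}" "c \<in> {1,2,3,4}" "d \<in> {1,2,3,4}" "distinct [a,b,c,d]"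
  shows "[a,b,c,d] \<in> PS"
  using C4 assms by (metis list.set(1) list.set(2))

lemma S4_eq: "S4 = pl ` PS"
proof
  show "pl ` PS \<subseteq> S4" using pl_permutes by (auto simp: S4_def)
  show "S4 \<subseteq> pl ` PS"
  proof
    fix s assume "s \<in> S4"
    then have p: "s permutes {1,2,3,4}" by (simp add: S4_def)
    have eq: "s = pl [s 1, s 2, s 3, s 4]"
    proof (rule ext)
      fix i show "s i = pl [s 1, s 2, s 3, s 4] i"
      proof (cases "1 \<le> i \<and> i \<le> 4")
        case True then have "i=1 \<or> i=2 \<or> i=3 \<or> i=4" by auto
        then show ?thesis by (auto simp: pl_def)
      next
        case False then have "i \<notin> {1,2,3,4}" by auto
        then show ?thesis using False p by (simp add: pl_def permutes_not_in)
      qed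
    qed
    have im: "s k \<in> {1,2,3,4}" if "k \<in> {1,2,3,4}" for k using permutes_in_image[OF p] that by blast
    have "inj s" using p permutes_inj by blast
    then have "distinct [s 1, s 2, s 3, s 4]" by (simp add: inj_eq)
    then have "[s 1, s 2, s 3, s 4] \<in> PS" using im by (intro list4_in_PL) auto
    then show "s \<in> pl ` PS" using eq by blast
  qed
qed




lemma pl_ext: assumes "\<And>i. i \<in> {1,2,3,4} \<Longrightarrow> f i = pl x i" "\<And>i. i \<notin> {1,2,3,4} \<Longrightarrow> f i = i"
  shows "f = pl x"
proof (rule ext)
  fix i show "f i = pl x i"
  proof (cases "i \<in> {1,2,3,4}")
    case False then show ?thesis using assms(2) by (auto simp: pl_def)
  qed (use assms(1) in auto)
qed

lemma tr12: "Transposition.transpose 1 2 = pl [2,1,3,4]"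
  by (rule pl_ext) (auto simp: pl_def Transposition.transpose_def)
lemma tr34: "Transposition.transpose 3 4 = pl [1,2,4,3]"
  by (rule pl_ext) (auto simp: pl_def Transposition.transpose_def)
lemma tr23: "Transposition.transpose 2 3 = pl [1,3,2,4]"
  by (rule pl_ext) (auto simp: pl_def Transposition.transpose_def)
lemma tr1324: "Transposition.transpose 1 3 \<circ> Transposition.transpose 2 4 = pl [3,4,1,2]"
  by (rule pl_ext) (auto simp: pl_def Transposition.transpose_def)

lemma gen_sub_pl:
  assumes KP: "set K \<subseteq> PS" and Kid: "idL \<in> set K" and Kc: "\<forall>a\<in>set K. \<forall>b\<in>set K. compL a b \<in> set K"
    and GK: "set G \<subseteq> set K" and Kw: "set K \<subseteq> set (words G)"
  shows "gen_sub (pl ` set G) = pl ` set K"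
proof
  have "pl ` set K \<in> {K'. id \<in> K' \<and> pl ` set G \<subseteq> K' \<and> (\<forall>a\<in>K'. \<forall>b\<in>K'. a \<circ> b \<in> K')}"
  proof (intro CollectI conjI ballI)
    show "id \<in> pl ` set K" using Kid pl_id by (metis image_eqI)
    show "pl ` set G \<subseteq> pl ` set K" using GK by auto
    fix a b assume "a \<in> pl ` set K" "b \<in> pl ` set K"
    then obtain x y where "x \<in> set K" "y \<in> set K" "a = pl x" "b = pl y" by auto
    then show "a \<circ> b \<in> pl ` set K" using KP Kc pl_compP[of x y] by (metis image_eqI subsetD)
  qed
  then show "gen_sub (pl ` set G) \<subseteq> pl ` set K" unfolding gen_sub_def by (rule Inter_lower)
next
  have GP: "set G \<subseteq> PS" using GK KP by auto
  show "pl ` set K \<subseteq> gen_sub (pl ` set G)"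
    unfolding gen_sub_def
  proof (intro subsetI InterI)
    fix y K' assume y: "y \<in> pl ` set K" and K': "K' \<in> {K'. id \<in> K' \<and> pl ` set G \<subseteq> K' \<and> (\<forall>a\<in>K'. \<forall>b\<in>K'. a \<circ> b \<in> K')}"
    then have i: "id \<in> K'" and g: "\<And>x. x \<in> set G \<Longrightarrow> pl x \<in> K'" and c: "\<And>a b. a \<in> K' \<Longrightarrow> b \<in> K' \<Longrightarrow> a \<circ> b \<in> K'"
      by auto
    obtain k where k: "k \<in> set K" "y = pl k" using y by auto
    have "k \<in> set (words G)" using k Kw by auto
    then consider "k = idL" | "k \<in> set G" | a b where "a \<in> set G" "b \<in> set G" "k = compL a b"
      | a b c where "a \<in> set G" "b \<in> set G" "c \<in> set G" "k = compL (compL a b) c"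
      unfolding words_def by auto
    then show "y \<in> K'"
    proof cases
      case 1 then show ?thesis using k i pl_id by simp
    next
      case 2 then show ?thesis using k g by simp
    next
      case 3 then show ?thesis using k g c GP pl_compP by (metis subsetD)
    next
      case 4
      have ab: "compL a b \<in> PS" using 4 GP C_closed by auto
      have "y = (pl a \<circ> pl b) \<circ> pl c" using 4 k GP ab pl_compP by (metis subsetD)
      then show ?thesis using 4 g c by simp
    qed
  qed
qed

lemma H4_eq: "H4 = pl ` set HL"
proof -
  have "{Transposition.transpose 1 2, Transposition.transpose 3 4} = pl ` set [[2,1,3,4],[1,2,4,3]]"
    unfolding tr12 tr34 by simp
  then show ?thesis unfolding H4_def using gen_sub_pl[OF C_H1 C_H2 C_H3 C_H4 C_H5] by simp
qed

lemma D4_eq: "D4 = pl ` set DL"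
proof -
  have "{Transposition.transpose 1 2, Transposition.transpose 3 4, Transposition.transpose 1 3 \<circ> Transposition.transpose 2 4} = pl ` set [[2,1,3,4],[1,2,4,3],[3,4,1,2]]"
    unfolding tr12 tr34 tr1324 by simp
  then show ?thesis unfolding D4_def using gen_sub_pl[OF C_D1 C_D2 C_D3 C_D4 C_D5] by simp
qed

lemma dc_eq: assumes x: "x \<in> PS" shows "double_coset H4 (pl x) = pl ` set (dcL x)"
proof -
  have HP: "set HL \<subseteq> PS" by (rule C_H1)
  have e: "pl (compL (compL h x) k) = pl h \<circ> pl x \<circ> pl k" if "h \<in> set HL" "k \<in> set HL" for h k
    using that HP x C_closed pl_compP by (metis subsetD)
  show ?thesis
    unfolding double_coset_def H4_eq dcL_def
  proof (intro set_eqI iffI)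
    fix y assume "y \<in> {h \<circ> pl x \<circ> h' |h h'. h \<in> pl ` set HL \<and> h' \<in> pl ` set HL}"
    then obtain h k where "h \<in> set HL" "k \<in> set HL" "y = pl h \<circ> pl x \<circ> pl k" by blast
    then show "y \<in> pl ` set (concat (map (\<lambda>h. map (compL (compL h x)) HL) HL))"
      using e by force
  next
    fix y assume "y \<in> pl ` set (concat (map (\<lambda>h. map (compL (compL h x)) HL) HL))"
    then obtain h k where "h \<in> set HL" "k \<in> set HL" "y = pl (compL (compL h x) k)" by auto
    then show "y \<in> {h \<circ> pl x \<circ> h' |h h'. h \<in> pl ` set HL \<and> h' \<in> pl ` set HL}"
      using e by blast
  qed
qed

lemma pl_id_iff: "y \<in> PS \<Longrightarrow> pl y = id \<longleftrightarrow> y = idL"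
  using pl_id pl_injP C_id by metis

lemma moved_pl: "moved (pl y) = movedL y"
proof -
  have "{i \<in> {1,2,3,4::nat}. pl y i \<noteq> i} = set (filter (\<lambda>i. y ! (i - 1) \<noteq> i) [1,2,3,4])"
    by (auto simp: pl_def)
  moreover have "card (set (filter (\<lambda>i. y ! (i - 1) \<noteq> i) [1,2,3,4::nat])) = length (filter (\<lambda>i. y ! (i - 1) \<noteq> i) [1,2,3,4::nat])"
    by (rule distinct_card) simp
  ultimately show ?thesis unfolding moved_def movedL_def by simp
qed

lemma chiV_pl: assumes "y \<in> PS" shows "chiV (pl y) = chiL y"
proof -
  have "pl y \<circ> pl y = id \<longleftrightarrow> compL y y = idL"
    using assms pl_compP[of y y] pl_id_iff[of "compL y y"] C_closed by auto
  then show ?thesis unfolding chiV_def chiL_def by (simp only: pl_id_iff[OF assms] moved_pl)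
qed

lemma chiV_inv_pl: "y \<in> PS \<Longrightarrow> chiV (inv (pl y)) = chiL (invL y)"
  using inv_pl chiV_pl C_inv by simp




definition act :: "((nat \<Rightarrow> nat) \<Rightarrow> 'g::finite cvec \<Rightarrow> 'g cvec) \<Rightarrow> (nat list \<Rightarrow> int) \<Rightarrow> 'g cvec \<Rightarrow> 'g cvec" where
  "act \<rho> c v = (\<Sum>x\<in>PS. of_int (c x) *s \<rho> (pl x) v)"

lemma smult_sum_left: "(\<Sum>i\<in>I. f i) *s (w::'a::comm_ring_1^'n) = (\<Sum>i\<in>I. f i *s w)"
  by (simp add: vec_eq_iff sum_distrib_right)

lemma conv_sum: "conv a b z = (\<Sum>x\<in>PS. a x * b (compL (invL x) z))"
  unfolding conv_def using C_dist by (simp add: sum_list_distinct_conv_sum_set)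

context fixes L :: "'g::finite cvec set" assumes lat: "is_lattice L"
begin
lemma lat0: "0 \<in> L" using lat by (simp add: is_lattice_def)
lemma lat_diff: "x \<in> L \<Longrightarrow> y \<in> L \<Longrightarrow> x - y \<in> L" using lat by (simp add: is_lattice_def)
lemma lat_neg: "x \<in> L \<Longrightarrow> - x \<in> L" using lat_diff[OF lat0] by fastforce
lemma lat_add: "x \<in> L \<Longrightarrow> y \<in> L \<Longrightarrow> x + y \<in> L"
  using lat_diff[of x "- y"] lat_neg by simp
lemma lat_nat: "x \<in> L \<Longrightarrow> of_nat n *s x \<in> L"
proof (induction n)
  case 0 then show ?case using lat0 by simp
next
  case (Suc n)
  have "of_nat (Suc n) *s x = of_nat n *s x + x" by (simp add: vector_sadd_rdistrib)
  then show ?case using Suc lat_add by simp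
qed
lemma lat_int: "x \<in> L \<Longrightarrow> of_int k *s x \<in> L"
proof (cases "k \<ge> 0")
  case True then obtain n where "k = int n" by (metis nonneg_eq_int)
  then show "x \<in> L \<Longrightarrow> of_int k *s x \<in> L" using lat_nat by simp
next
  case False then obtain n where "k = - int n" by (metis nonpos_int_cases linorder_linear)
  then have "of_int k *s x = - (of_nat n *s x)" by (simp add: vector_smult_lneg)
  then show "x \<in> L \<Longrightarrow> of_int k *s x \<in> L" using lat_nat lat_neg by simp
qed
lemma lat_sum: "(\<And>i. i \<in> I \<Longrightarrow> f i \<in> L) \<Longrightarrow> (\<Sum>i\<in>I. f i) \<in> L"
proof (induction I rule: infinite_finite_induct)
  case (infinite A) then show ?case using lat0 by simp
next
  case empty then show ?case using lat0 by simp
next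
  case (insert x F) then show ?case using lat_add by simp
qed
lemma lat_disc: "\<exists>e>0. \<forall>x\<in>L. \<forall>y\<in>L. dist x y < e \<longrightarrow> x = y"
proof -
  obtain e where e: "e > 0" "\<forall>x\<in>L. norm x < e \<longrightarrow> x = 0" using lat by (auto simp: is_lattice_def)
  show ?thesis
  proof (intro exI conjI ballI impI)
    fix x y assume "x \<in> L" "y \<in> L" "dist x y < e"
    moreover have "x - y \<in> L" using \<open>x \<in> L\<close> \<open>y \<in> L\<close> by (rule lat_diff)
    moreover have "norm (x - y) < e" using \<open>dist x y < e\<close> by (simp add: dist_norm)
    ultimately have "x - y = 0" using e(2) by blast
    then show "x = y" by simp
  qed (use e in auto)
qed
end

context
  fixes L :: "'g::finite cvec set" and \<rho> :: "(nat \<Rightarrow> nat) \<Rightarrow> 'g cvec \<Rightarrow> 'g cvec"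
  assumes lat: "is_lattice L" and act: "S4_action L \<rho>"
begin

lemma pl_S4: "x \<in> PS \<Longrightarrow> pl x \<in> S4" using S4_eq by auto

lemma endo: "x \<in> PS \<Longrightarrow> is_endo L (\<rho> (pl x))"
  using act pl_S4 by (simp add: S4_action_def)

lemma rho_add: "x \<in> PS \<Longrightarrow> \<rho> (pl x) (u + w) = \<rho> (pl x) u + \<rho> (pl x) w"
  using endo by (simp add: is_endo_def)
lemma rho_smult: "x \<in> PS \<Longrightarrow> \<rho> (pl x) (c *s u) = c *s \<rho> (pl x) u"
  using endo by (simp add: is_endo_def)
lemma rho_L: "x \<in> PS \<Longrightarrow> l \<in> L \<Longrightarrow> \<rho> (pl x) l \<in> L"
  using endo unfolding is_endo_def by blast
lemma rho_zero: "x \<in> PS \<Longrightarrow> \<rho> (pl x) 0 = 0"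
  using rho_smult[of x 0 0] by simp
lemma rho_comp: "x \<in> PS \<Longrightarrow> y \<in> PS \<Longrightarrow> \<rho> (pl (compL x y)) v = \<rho> (pl x) (\<rho> (pl y) v)"
  using act pl_S4 pl_compP by (simp add: S4_action_def)
lemma rho_id: "\<rho> (pl idL) v = v"
  using act pl_id by (simp add: S4_action_def)
lemma rho_sum: assumes "x \<in> PS" shows "\<rho> (pl x) (\<Sum>i\<in>I. f i) = (\<Sum>i\<in>I. \<rho> (pl x) (f i))"
proof (induction I rule: infinite_finite_induct)
  case (infinite A) then show ?case using rho_zero[OF assms] by simp
next
  case empty then show ?case using rho_zero[OF assms] by simp
next
  case (insert y F) then show ?case using rho_add[OF assms] by simp
qed

lemma act_comp: "act \<rho> a (act \<rho> b v) = act \<rho> (conv a b) v"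
proof -
  have "act \<rho> a (act \<rho> b v) = (\<Sum>x\<in>PS. \<Sum>y\<in>PS. of_int (a x * b y) *s \<rho> (pl (compL x y)) v)"
    unfolding act_def
  proof (rule sum.cong[OF refl])
    fix x assume x: "x \<in> PS"
    have "of_int (a x) *s \<rho> (pl x) (\<Sum>y\<in>PS. of_int (b y) *s \<rho> (pl y) v)
        = of_int (a x) *s (\<Sum>y\<in>PS. of_int (b y) *s \<rho> (pl x) (\<rho> (pl y) v))"
      using x by (simp add: rho_sum rho_smult)
    also have "\<dots> = (\<Sum>y\<in>PS. of_int (a x * b y) *s \<rho> (pl x) (\<rho> (pl y) v))"
      by (simp add: sum_cmul[symmetric] vector_smult_assoc)
    also have "\<dots> = (\<Sum>y\<in>PS. of_int (a x * b y) *s \<rho> (pl (compL x y)) v)"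
      using x by (intro sum.cong refl) (simp add: rho_comp)
    finally show "of_int (a x) *s \<rho> (pl x) (\<Sum>y\<in>PS. of_int (b y) *s \<rho> (pl y) v)
        = (\<Sum>y\<in>PS. of_int (a x * b y) *s \<rho> (pl (compL x y)) v)" .
  qed
  also have "\<dots> = (\<Sum>x\<in>PS. \<Sum>z\<in>PS. of_int (a x * b (compL (invL x) z)) *s \<rho> (pl z) v)"
  proof (rule sum.cong[OF refl])
    fix x assume x: "x \<in> PS"
    show "(\<Sum>y\<in>PS. of_int (a x * b y) *s \<rho> (pl (compL x y)) v)
        = (\<Sum>z\<in>PS. of_int (a x * b (compL (invL x) z)) *s \<rho> (pl z) v)"
    proof (rule sum.reindex_bij_witness[where i="\<lambda>z. compL (invL x) z" and j="\<lambda>y. compL x y"])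
      fix y assume "y \<in> PS" then show "compL (invL x) (compL x y) = y" using x C_cancel2 by blast
    next
      fix y assume "y \<in> PS" then show "compL x y \<in> PS" using x C_closed by blast
    next
      fix z assume "z \<in> PS" then show "compL x (compL (invL x) z) = z" using x C_cancel by blast
    next
      fix z assume "z \<in> PS" then show "compL (invL x) z \<in> PS" using x C_closed C_inv by blast
    next
      fix y assume "y \<in> PS"
      then show "of_int (a x * b (compL (invL x) (compL x y))) *s \<rho> (pl (compL x y)) v
           = of_int (a x * b y) *s \<rho> (pl (compL x y)) v" using x C_cancel2 by simp
    qed
  qed
  also have "\<dots> = (\<Sum>z\<in>PS. \<Sum>x\<in>PS. of_int (a x * b (compL (invL x) z)) *s \<rho> (pl z) v)"
    by (rule sum.swap)
  also have "\<dots> = act \<rho> (conv a b) v"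
    unfolding act_def conv_sum by (simp add: smult_sum_left)
  finally show ?thesis .
qed

lemma act_cong: "(\<And>x. x \<in> PS \<Longrightarrow> a x = b x) \<Longrightarrow> act \<rho> a v = act \<rho> b v"
  unfolding act_def by (intro sum.cong) auto

lemma act_add: "act \<rho> a v + act \<rho> b v = act \<rho> (\<lambda>x. a x + b x) v"
  unfolding act_def by (simp add: sum.distrib[symmetric] vector_sadd_rdistrib)

lemma act_diff: "act \<rho> a v - act \<rho> b v = act \<rho> (\<lambda>x. a x - b x) v"
  unfolding act_def by (simp add: sum_subtractf[symmetric] vector_sub_rdistrib)

lemma act_scal: "of_int k *s act \<rho> a v = act \<rho> (\<lambda>x. k * a x) v"
  unfolding act_def by (simp add: sum_cmul[symmetric] vector_smult_assoc)

lemma act_vadd: "act \<rho> a (u + w) = act \<rho> a u + act \<rho> a w"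
  unfolding act_def by (simp add: rho_add vector_add_ldistrib sum.distrib)

lemma act_vsmult: "act \<rho> a (c *s u) = c *s act \<rho> a u"
  unfolding act_def by (simp add: rho_smult vector_smult_assoc sum_cmul[symmetric] mult.commute)

lemma act_vdiff: "act \<rho> a (u - w) = act \<rho> a u - act \<rho> a w"
  using act_vadd[of a "u - w" w] by simp

lemma act_zero: "(\<And>x. x \<in> PS \<Longrightarrow> a x = 0) \<Longrightarrow> act \<rho> a v = 0"
  unfolding act_def by (intro sum.neutral) auto

lemma act_idc: "act \<rho> (ind [idL]) v = v"
proof -
  have "act \<rho> (ind [idL]) v = (\<Sum>x\<in>PS. if x = idL then \<rho> (pl x) v else 0)"
    unfolding act_def ind_def by (intro sum.cong) auto
  also have "\<dots> = v" using C_id rho_id by (simp add: sum.delta')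
  finally show ?thesis .
qed

lemma act_L: "l \<in> L \<Longrightarrow> act \<rho> a l \<in> L"
  unfolding act_def by (intro lat_sum[OF lat] lat_int[OF lat] rho_L)

lemma normop_pl: assumes "set K \<subseteq> PS" shows "normop \<rho> (pl ` set K) v = act \<rho> (ind K) v"
proof -
  have "normop \<rho> (pl ` set K) v = (\<Sum>x\<in>set K. \<rho> (pl x) v)"
    unfolding normop_def using inj_on_subset[OF inj_pl assms] by (simp add: sum.reindex)
  also have "\<dots> = (\<Sum>x\<in>PS \<inter> set K. \<rho> (pl x) v)" using assms by (simp add: Int_absorb1)
  also have "\<dots> = (\<Sum>x\<in>PS. if x \<in> set K then \<rho> (pl x) v else 0)" by (simp add: sum.inter_restrict)
  also have "\<dots> = act \<rho> (ind K) v" unfolding act_def ind_def by (intro sum.cong) auto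
  finally show ?thesis .
qed

lemma scaleR_smult: "(r::real) *\<^sub>R (x::'g cvec) = complex_of_real r *s x"
proof (rule vec_eq_iff[THEN iffD2], rule allI)
  fix i
  have "(r *\<^sub>R x) $ i = r *\<^sub>R (x $ i)" by (rule vector_scaleR_component)
  also have "\<dots> = complex_of_real r * x $ i" by (rule scaleR_conv_of_real)
  also have "\<dots> = (complex_of_real r *s x) $ i" by (rule vector_smult_component[symmetric])
  finally show "(r *\<^sub>R x) $ i = (complex_of_real r *s x) $ i" .
qed

lemma act_linear: "linear (act \<rho> a)"
  by (rule linearI) (simp_all add: act_vadd scaleR_smult act_vsmult)

lemma act_cont: "continuous_on UNIV (act \<rho> a)"
  using act_linear linear_continuous_on linear_conv_bounded_linear by blast

end



lemma C_mem: "[1,3,2,4] \<in> PS \<and> [3,4,1,2] \<in> PS" by code_simp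

lemma istop_torus: "istopology (\<lambda>U. U \<subseteq> range (tor L) \<and> open (tor L -` U))"
  unfolding istopology_def by (auto simp: vimage_Union intro!: open_Union)

lemma openin_torus: "openin (torus_top L) U \<longleftrightarrow> U \<subseteq> range (tor L) \<and> open (tor L -` U)"
  unfolding torus_top_def by (subst topology_inverse'[OF istop_torus]) simp

lemma topspace_torus: "topspace (torus_top L) = range (tor L)"
proof
  show "topspace (torus_top L) \<subseteq> range (tor L)" unfolding topspace_def openin_torus by auto
  have "tor L -` range (tor L) = UNIV" by auto
  then have "openin (torus_top L) (range (tor L))" unfolding openin_torus by simp
  then show "range (tor L) \<subseteq> topspace (torus_top L)" by (rule openin_subset)
qed

lemma tor_cont: "continuous_map euclidean (torus_top L) (tor L)"
  unfolding continuous_map_def topspace_torus openin_torus by (auto simp: vimage_def)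

context fixes L :: "'g::finite cvec set" assumes lat: "is_lattice L"
begin

lemma tor_eq: "tor L x = tor L y \<longleftrightarrow> x - y \<in> L"
proof
  assume "tor L x = tor L y"
  moreover have "x \<in> tor L x" unfolding tor_def using lat0[OF lat] by (metis add.right_neutral image_eqI)
  ultimately obtain l where "l \<in> L" "x = y + l" unfolding tor_def by auto
  then show "x - y \<in> L" by simp
next
  assume d: "x - y \<in> L"
  then have d': "y - x \<in> L" using lat_neg[OF lat] by (metis minus_diff_eq)
  show "tor L x = tor L y" unfolding tor_def
  proof (intro set_eqI iffI)
    fix z assume "z \<in> (+) x ` L"
    then obtain l where "l \<in> L" "z = x + l" by auto
    then have "z = y + ((x - y) + l)" "(x - y) + l \<in> L" using d lat_add[OF lat] by auto
    then show "z \<in> (+) y ` L" by blast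
  next
    fix z assume "z \<in> (+) y ` L"
    then obtain l where "l \<in> L" "z = y + l" by auto
    then have "z = x + ((y - x) + l)" "(y - x) + l \<in> L" using d' lat_add[OF lat] by auto
    then show "z \<in> (+) x ` L" by blast
  qed
qed

lemma sat_vimage: assumes "\<forall>x\<in>X. \<forall>l\<in>L. x + l \<in> X" shows "tor L -` (tor L ` X) = X"
proof
  show "tor L -` tor L ` X \<subseteq> X"
  proof
    fix v assume "v \<in> tor L -` tor L ` X"
    then obtain x where "x \<in> X" "tor L v = tor L x" by auto
    then have "v - x \<in> L" using tor_eq by simp
    then have "x + (v - x) \<in> X" using assms \<open>x \<in> X\<close> by blast
    then show "v \<in> X" by simp
  qed
qed auto

lemma open_sat: "\<forall>x\<in>X. \<forall>l\<in>L. x + l \<in> X \<Longrightarrow> open X \<Longrightarrow> openin (torus_top L) (tor L ` X)"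
  unfolding openin_torus using sat_vimage by auto

lemma sat_mem: "\<forall>x\<in>X. \<forall>l\<in>L. x + l \<in> X \<Longrightarrow> tor L v \<in> tor L ` X \<Longrightarrow> v \<in> X"
  using sat_vimage by blast

end

context
  fixes L :: "'g::finite cvec set" and \<rho> :: "(nat \<Rightarrow> nat) \<Rightarrow> 'g cvec \<Rightarrow> 'g cvec"
  assumes lat: "is_lattice L" and act: "S4_action L \<rho>"
begin

lemma normH: "normop \<rho> H4 v = act \<rho> (ind HL) v"
  unfolding H4_eq using normop_pl[OF lat act C_H1] .
lemma normD: "normop \<rho> D4 v = act \<rho> (ind DL) v"
  unfolding D4_eq using normop_pl[OF lat act C_D1] .
lemma norm2: "normop \<rho> (double_coset H4 (Transposition.transpose 2 3)) v = act \<rho> (ind (dcL [1,3,2,4])) v"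
  unfolding tr23 dc_eq[OF C_mem[THEN conjunct1]] using normop_pl[OF lat act] C_dc by blast
lemma norm3: "normop \<rho> (double_coset H4 (Transposition.transpose 1 3 \<circ> Transposition.transpose 2 4)) v = act \<rho> (ind (dcL [3,4,1,2])) v"
  unfolding tr1324 dc_eq[OF C_mem[THEN conjunct2]] using normop_pl[OF lat act] C_dc by blast

lemma P_fun: "(\<lambda>v. 2 *s normop \<rho> H4 v - normop \<rho> D4 v) = act \<rho> mC"
proof (rule ext)
  fix v
  have "2 *s normop \<rho> H4 v - normop \<rho> D4 v = of_int 2 *s act \<rho> (ind HL) v - act \<rho> (ind DL) v"
    by (simp add: normH normD)
  also have "\<dots> = act \<rho> mC v"
    by (simp only: act_scal[OF lat act] act_diff[OF lat act]) (rule act_cong[OF lat act], simp add: mC_def)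
  finally show "2 *s normop \<rho> H4 v - normop \<rho> D4 v = act \<rho> mC v" .
qed

lemma AHV_fun: "(\<lambda>v. \<Sum>h\<in>H4. \<Sum>g\<in>S4. of_int (chiV (inv g)) *s \<rho> (h \<circ> g) v) = (\<lambda>v. 4 *s act \<rho> mC v)"
proof (rule ext)
  fix v
  let ?c = "\<lambda>x. chiL (invL x)"
  have HP: "set HL \<subseteq> PS" by (rule C_H1)
  have "(\<Sum>h\<in>H4. \<Sum>g\<in>S4. of_int (chiV (inv g)) *s \<rho> (h \<circ> g) v)
      = (\<Sum>x\<in>set HL. \<Sum>y\<in>PS. of_int (chiV (inv (pl y))) *s \<rho> (pl x \<circ> pl y) v)"
    unfolding H4_eq S4_eq using inj_on_subset[OF inj_pl HP] inj_pl by (simp add: sum.reindex)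
  also have "\<dots> = (\<Sum>x\<in>set HL. \<rho> (pl x) (act \<rho> ?c v))"
  proof (rule sum.cong[OF refl])
    fix x assume x: "x \<in> set HL"
    then have xP: "x \<in> PS" using HP by auto
    have "(\<Sum>y\<in>PS. of_int (chiV (inv (pl y))) *s \<rho> (pl x \<circ> pl y) v)
        = (\<Sum>y\<in>PS. \<rho> (pl x) (of_int (?c y) *s \<rho> (pl y) v))"
      using xP by (intro sum.cong refl) (simp add: chiV_inv_pl pl_compP[symmetric] rho_comp[OF lat act] rho_smult[OF lat act])
    also have "\<dots> = \<rho> (pl x) (act \<rho> ?c v)"
      unfolding act_def using xP by (simp add: rho_sum[OF lat act])
    finally show "(\<Sum>y\<in>PS. of_int (chiV (inv (pl y))) *s \<rho> (pl x \<circ> pl y) v) = \<rho> (pl x) (act \<rho> ?c v)" .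
  qed
  also have "\<dots> = normop \<rho> (pl ` set HL) (act \<rho> ?c v)"
    unfolding normop_def using inj_on_subset[OF inj_pl HP] by (simp add: sum.reindex)
  also have "\<dots> = act \<rho> (ind HL) (act \<rho> ?c v)" using normop_pl[OF lat act HP] by simp
  also have "\<dots> = act \<rho> (conv (ind HL) ?c) v" by (rule act_comp[OF lat act])
  also have "\<dots> = act \<rho> (\<lambda>x. 4 * mC x) v" using C_I1 by (intro act_cong[OF lat act]) auto
  also have "\<dots> = of_int 4 *s act \<rho> mC v" by (simp only: act_scal[OF lat act])
  finally show "(\<Sum>h\<in>H4. \<Sum>g\<in>S4. of_int (chiV (inv g)) *s \<rho> (h \<circ> g) v) = 4 *s act \<rho> mC v" by simp
qed

lemma range_M4: "range (\<lambda>v. 4 *s act \<rho> mC v) = range (act \<rho> mC)"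
proof
  show "range (\<lambda>v. 4 *s act \<rho> mC v) \<subseteq> range (act \<rho> mC)"
    using act_vsmult[OF lat act] by (metis (no_types, lifting) image_subset_iff rangeI)
  show "range (act \<rho> mC) \<subseteq> range (\<lambda>v. 4 *s act \<rho> mC v)"
  proof
    fix y assume "y \<in> range (act \<rho> mC)"
    then obtain u where "y = act \<rho> mC u" by auto
    then have "y = 4 *s act \<rho> mC ((1/4) *s u)" by (simp add: act_vsmult[OF lat act] vector_smult_assoc)
    then show "y \<in> range (\<lambda>v. 4 *s act \<rho> mC v)" by blast
  qed
qed

end



context
  fixes L :: "'g::finite cvec set" and \<rho> :: "(nat \<Rightarrow> nat) \<Rightarrow> 'g cvec \<Rightarrow> 'g cvec"
  assumes lat: "is_lattice L" and act: "S4_action L \<rho>"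
begin

abbreviation "MM \<equiv> act \<rho> mC"
abbreviation "NH \<equiv> act \<rho> (ind HL)"
abbreviation "N2 \<equiv> act \<rho> (ind (dcL [1,3,2,4]))"
abbreviation "N3 \<equiv> act \<rho> (ind (dcL [3,4,1,2]))"
abbreviation "psi \<equiv> act \<rho> (\<lambda>x. 8 * ind [idL] x - mC x)"

lemma AHV_eq: "A_HV L \<rho> = tor L ` range MM"
  unfolding A_HV_def im_endo_def AHV_fun[OF lat act] range_M4[OF lat act] ..

lemma P_eq: "P_compl L \<rho> = tor L ` range MM"
  unfolding P_compl_def im_endo_def P_fun[OF lat act] ..

lemma Asub_eq: "A_sub L \<rho> H4 = tor L ` range NH"
proof -
  have "normop \<rho> H4 = NH" using normH[OF lat act] by (rule ext)
  then show ?thesis unfolding A_sub_def im_endo_def by simp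
qed

lemma Q_eq: "Q_set L \<rho> = {z \<in> tor L ` range NH. \<exists>v. z = tor L v \<and> N2 v \<in> L \<and> N3 v + 4 *s v \<in> L}"
  unfolding Q_set_def Asub_eq norm2[OF lat act] norm3[OF lat act] ..

lemma M_zero: "MM 0 = 0" using act_vsmult[OF lat act, of mC 0 0] by simp

lemma P_sub_Q: "tor L ` range MM \<subseteq> Q_set L \<rho>"
proof
  fix z assume "z \<in> tor L ` range MM"
  then obtain u where z: "z = tor L (MM u)" by auto
  have "MM u = NH (act \<rho> (\<lambda>x. ind [idL] x - ind [[3,4,1,2]] x) u)"
    unfolding act_comp[OF lat act] using C_I4 by (intro act_cong[OF lat act]) auto
  then have "z \<in> tor L ` range NH" using z by auto
  moreover have "N2 (MM u) = 0"
    unfolding act_comp[OF lat act] using C_I5 by (intro act_zero[OF lat act]) auto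
  moreover have "N3 (MM u) + 4 *s MM u = 0"
  proof -
    have "N3 (MM u) + 4 *s MM u = N3 (MM u) + of_int 4 *s MM u" by simp
    also have "\<dots> = act \<rho> (\<lambda>x. conv (ind (dcL [3,4,1,2])) mC x + 4 * mC x) u"
      by (simp only: act_comp[OF lat act] act_scal[OF lat act] act_add[OF lat act])
    also have "\<dots> = 0" using C_I6 by (intro act_zero[OF lat act]) auto
    finally show ?thesis .
  qed
  ultimately show "z \<in> Q_set L \<rho>" unfolding Q_eq using z lat0[OF lat] by auto
qed

lemma psi_eq: "psi w = 8 *s w - MM w"
proof -
  have "psi w = of_int 8 *s act \<rho> (ind [idL]) w - MM w"
    by (simp only: act_scal[OF lat act] act_diff[OF lat act])
  then show ?thesis using act_idc[OF lat act] by simp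
qed

lemma psi_NH: "psi (NH u) = N3 (NH u) + 4 *s NH u"
proof -
  have "psi (NH u) = act \<rho> (\<lambda>x. conv (ind (dcL [3,4,1,2])) (ind HL) x + 4 * ind HL x) u"
    unfolding act_comp[OF lat act] using C_I3 by (intro act_cong[OF lat act]) auto
  also have "\<dots> = N3 (NH u) + of_int 4 *s NH u"
    by (simp only: act_comp[OF lat act] act_scal[OF lat act] act_add[OF lat act])
  finally show ?thesis by simp
qed

lemma Q_rep: assumes "z \<in> Q_set L \<rho>" shows "\<exists>v. z = tor L v \<and> psi v \<in> L"
proof -
  from assms obtain u v where zu: "z = tor L (NH u)" and zv: "z = tor L v" and c3: "N3 v + 4 *s v \<in> L"
    unfolding Q_eq by auto
  define l where "l = v - NH u"
  have l: "l \<in> L" using zu zv tor_eq[OF lat] l_def by simp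
  have vl: "v = NH u + l" using l_def by simp
  have "N3 v + 4 *s v = (N3 (NH u) + 4 *s NH u) + (N3 l + 4 *s l)"
    unfolding vl act_vadd[OF lat act] by (simp add: vector_add_ldistrib algebra_simps)
  then have "psi (NH u) = (N3 v + 4 *s v) - (N3 l + 4 *s l)" using psi_NH by simp
  moreover have "N3 l + 4 *s l \<in> L"
    using lat_add[OF lat] act_L[OF lat act l] lat_int[OF lat l, of 4] by simp
  ultimately have "psi (NH u) \<in> L" using c3 lat_diff[OF lat] by simp
  then have "psi v \<in> L" unfolding vl act_vadd[OF lat act] using lat_add[OF lat] act_L[OF lat act l] by simp
  then show ?thesis using zv by blast
qed

theorem main_ctx:
  "A_HV L \<rho> = connected_component_of_set (subtopology (torus_top L) (Q_set L \<rho>)) (tor L 0)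
   \<and> connected_component_of_set (subtopology (torus_top L) (Q_set L \<rho>)) (tor L 0) = P_compl L \<rho>"
proof -
  let ?T = "torus_top L"
  let ?Q = "Q_set L \<rho>"
  let ?C = "connected_component_of_set (subtopology ?T ?Q) (tor L 0)"
  let ?P = "tor L ` range MM"
  have conP: "connectedin ?T ?P"
  proof -
    have "connected (range MM)" using act_cont[OF lat act] by (intro connected_continuous_image) auto
    then show ?thesis using connectedin_continuous_map_image[OF tor_cont] by (metis connectedin_iff_connected)
  qed
  have t0: "tor L 0 \<in> ?P" using M_zero by (metis rangeI image_eqI)
  have PC: "?P \<subseteq> ?C"
    using conP P_sub_Q t0 by (intro connected_component_of_maximal) (simp add: connectedin_subtopology)
  have CP: "?C \<subseteq> ?P"
  proof -
    obtain e where e: "e > 0" "\<forall>x\<in>L. \<forall>y\<in>L. dist x y < e \<longrightarrow> x = y" using lat_disc[OF lat] by blast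
    have psiL: "\<And>l. l \<in> L \<Longrightarrow> psi l \<in> L" using act_L[OF lat act] .
    define XU where "XU = (\<Union>l\<in>L. psi -` ball (psi l) e)"
    define XV where "XV = (\<Union>l\<in>L - psi ` L. psi -` ball l (e/2))"
    have opv: "open (psi -` B)" if "open B" for B
      using continuous_imp_open_vimage[OF act_cont[OF lat act] open_UNIV that] by simp
    have oU: "open XU" unfolding XU_def by (intro open_UN ballI opv) simp
    have oV: "open XV" unfolding XV_def by (intro open_UN ballI opv) simp
    have sU: "\<forall>x\<in>XU. \<forall>l\<in>L. x + l \<in> XU"
    proof (intro ballI)
      fix x l0 assume "x \<in> XU" "l0 \<in> L"
      then obtain l where l: "l \<in> L" "dist (psi x) (psi l) < e" unfolding XU_def by (auto simp: dist_commute)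
      have "dist (psi (x + l0)) (psi (l + l0)) = dist (psi x) (psi l)"
        by (simp add: act_vadd[OF lat act] dist_norm)
      moreover have "l + l0 \<in> L" using l \<open>l0 \<in> L\<close> lat_add[OF lat] by simp
      ultimately have "x + l0 \<in> psi -` ball (psi (l + l0)) e" "l + l0 \<in> L" using l by (auto simp: dist_commute)
      then show "x + l0 \<in> XU" unfolding XU_def by blast
    qed
    have sV: "\<forall>x\<in>XV. \<forall>l\<in>L. x + l \<in> XV"
    proof (intro ballI)
      fix x l0 assume "x \<in> XV" "l0 \<in> L"
      then obtain l where l: "l \<in> L" "l \<notin> psi ` L" "dist (psi x) l < e/2" unfolding XV_def by (auto simp: dist_commute)
      have "dist (psi (x + l0)) (l + psi l0) = dist (psi x) l"
        by (simp add: act_vadd[OF lat act] dist_norm)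
      moreover have "l + psi l0 \<in> L" using l \<open>l0 \<in> L\<close> lat_add[OF lat] psiL by simp
      moreover have "l + psi l0 \<notin> psi ` L"
      proof
        assume "l + psi l0 \<in> psi ` L"
        then obtain l1 where "l1 \<in> L" "l + psi l0 = psi l1" by auto
        then have "l = psi (l1 - l0)" by (simp add: act_vdiff[OF lat act] algebra_simps)
        moreover have "l1 - l0 \<in> L" using \<open>l1 \<in> L\<close> \<open>l0 \<in> L\<close> lat_diff[OF lat] by simp
        ultimately show False using l(2) by blast
      qed
      ultimately have "x + l0 \<in> psi -` ball (l + psi l0) (e/2)" "l + psi l0 \<in> L - psi ` L" using l by (auto simp: dist_commute)
      then show "x + l0 \<in> XV" unfolding XV_def by blast
    qed
    have CQ: "?C \<subseteq> ?Q" using connected_component_of_subset_topspace[of "subtopology ?T ?Q"] by auto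
    have conC: "connectedin ?T ?C"
      using connectedin_connected_component_of[of "subtopology ?T ?Q"] by (simp add: connectedin_subtopology)
    have cover: "?C \<subseteq> tor L ` XU \<union> tor L ` XV"
    proof
      fix z assume "z \<in> ?C"
      then obtain v where v: "z = tor L v" "psi v \<in> L" using Q_rep CQ by blast
      show "z \<in> tor L ` XU \<union> tor L ` XV"
      proof (cases "psi v \<in> psi ` L")
        case True
        then obtain l where "l \<in> L" "psi v = psi l" by auto
        then have "v \<in> psi -` ball (psi l) e" using e(1) by simp
        then have "v \<in> XU" unfolding XU_def using \<open>l \<in> L\<close> by blast
        then show ?thesis using v by auto
      next
        case False
        then have "v \<in> psi -` ball (psi v) (e/2)" "psi v \<in> L - psi ` L" using e(1) v(2) by auto
        then have "v \<in> XV" unfolding XV_def by blast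
        then show ?thesis using v by auto
      qed
    qed
    have disj: "tor L ` XU \<inter> tor L ` XV \<inter> ?C = {}"
    proof (rule ccontr)
      assume "tor L ` XU \<inter> tor L ` XV \<inter> ?C \<noteq> {}"
      then obtain z where z: "z \<in> tor L ` XU" "z \<in> tor L ` XV" "z \<in> ?C" by blast
      then obtain v where v: "z = tor L v" "psi v \<in> L" using Q_rep CQ by blast
      have vU: "v \<in> XU" using sat_mem[OF lat sU, of v] z(1) v(1) by simp
      have vV: "v \<in> XV" using sat_mem[OF lat sV, of v] z(2) v(1) by simp
      obtain l where l0: "l \<in> L" "v \<in> psi -` ball (psi l) e" using vU unfolding XU_def by blast
      then have l: "l \<in> L" "dist (psi v) (psi l) < e" by (simp_all add: dist_commute)
      obtain l' where l'0: "l' \<in> L - psi ` L" "v \<in> psi -` ball l' (e/2)" using vV unfolding XV_def by blast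
      then have l': "l' \<in> L" "l' \<notin> psi ` L" "dist (psi v) l' < e/2" by (simp_all add: dist_commute)
      have a: "psi v = psi l" using e(2) l v(2) psiL by blast
      have "dist (psi v) l' < e" using l'(3) e(1) by simp
      then have b: "psi v = l'" using e(2) l'(1) v(2) by blast
      show False using a b l l' by auto
    qed
    have ne: "tor L ` XU \<inter> ?C \<noteq> {}"
    proof -
      have "0 \<in> psi -` ball (psi 0) e" using e(1) by simp
      then have "0 \<in> XU" unfolding XU_def using lat0[OF lat] by blast
      then show ?thesis using PC t0 by blast
    qed
    have VC: "tor L ` XV \<inter> ?C = {}"
    proof (rule ccontr)
      assume "tor L ` XV \<inter> ?C \<noteq> {}"
      then show False using connectedinD[OF conC open_sat[OF lat sU oU] open_sat[OF lat sV oV] cover disj ne] by blast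
    qed
    show "?C \<subseteq> ?P"
    proof
      fix z assume zC: "z \<in> ?C"
      then have "z \<in> tor L ` XU" using cover VC by blast
      obtain v where v: "z = tor L v" "psi v \<in> L" using Q_rep CQ zC by blast
      then have "v \<in> XU" using sat_mem[OF lat sU, of v] \<open>z \<in> tor L ` XU\<close> by simp
      then obtain l where l0: "l \<in> L" "v \<in> psi -` ball (psi l) e" unfolding XU_def by blast
      then have l: "l \<in> L" "dist (psi v) (psi l) < e" by (simp_all add: dist_commute)
      then have "psi v = psi l" using e(2) v(2) psiL by blast
      define w where "w = v - l"
      have "psi w = 0" unfolding w_def using \<open>psi v = psi l\<close> by (simp add: act_vdiff[OF lat act])
      then have "MM w = 8 *s w" using psi_eq by simp
      then have "w = MM ((1/8) *s w)" by (simp add: act_vsmult[OF lat act] vector_smult_assoc)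
      moreover have "z = tor L w" using v tor_eq[OF lat] l unfolding w_def by simp
      ultimately show "z \<in> ?P" by (metis rangeI image_eqI)
    qed
  qed
  show ?thesis unfolding AHV_eq P_eq using PC CP by blast
qed

end



theorem mainTheorem10:
  fixes L :: "'g::finite cvec set"
    and \<rho> :: "(nat \<Rightarrow> nat) \<Rightarrow> 'g cvec \<Rightarrow> 'g cvec"
  assumes "abelian_variety L"
    and "S4_action L \<rho>"
  shows "A_HV L \<rho> = connected_component_of_set (subtopology (torus_top L) (Q_set L \<rho>)) (tor L 0)
       \<and> connected_component_of_set (subtopology (torus_top L) (Q_set L \<rho>)) (tor L 0) = P_compl L \<rho>"
proof -
  have "is_lattice L" using assms(1) by (simp add: abelian_variety_def)
  then show ?thesis using main_ctx assms(2) by blast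
qed

end
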